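(* Let $N=N_n\to\infty$ and $m=m_n\to\infty$ be sequences of positive integers, and let $\delta_n,\varepsilon_n$ be positive sequences converging to $0$ with $\varepsilon_n=o(\delta_n)$. For every $n$ there is a coupling of $M'=M'_n\overset{d}{=}M(\lfloor N(1+\varepsilon_n)\rfloor,m)$ and $M=M_n\overset{d}{=}M(N,m)$ such that $M\le M'$ almost surely and $\mathbb P(M'-\delta_n\mathbb E\,M'\le M)\to1$. If, additionally, $\mathbb P(M'>\delta_n^{-1})\to0$, then $\mathbb P(M=M')\to1$.
   Context: $M(N,m)$ is the maximum number of balls in a bin after $N$ balls are thrown independently and uniformly at random into $m$ bins. *)

theory Defs
  imports "HOL-Probability.Probability" "HOL-Library.Landau_Symbols"
begin

definition balls_pmf :: "nat \<Rightarrow> nat \<Rightarrow> (nat \<Rightarrow> nat) pmf" where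
  "balls_pmf N m = Pi_pmf {..<N} 0 (\<lambda>_. pmf_of_set {..<m})"

definition max_load :: "nat \<Rightarrow> nat \<Rightarrow> (nat \<Rightarrow> nat) \<Rightarrow> nat" where
  "max_load N m f = Max ((\<lambda>j. card {i\<in>{..<N}. f i = j}) ` {..<m})"

definition maxload_pmf :: "nat \<Rightarrow> nat \<Rightarrow> nat pmf" where
  "maxload_pmf N m = map_pmf (max_load N m) (balls_pmf N m)"

end

theory Submission
  imports Defs
begin

definition load :: "nat \<Rightarrow> (nat \<Rightarrow> nat) \<Rightarrow> nat \<Rightarrow> nat" where
  "load N f j = card {i\<in>{..<N}. f i = j}"

lemma max_load_load: "max_load N m f = Max (load N f ` {..<m})"
  unfolding max_load_def load_def by simp

definition jstar :: "nat \<Rightarrow> nat \<Rightarrow> (nat \<Rightarrow> nat) \<Rightarrow> nat" where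
  "jstar N m f = (LEAST j. j < m \<and> load N f j = max_load N m f)"

definition RR :: "nat \<Rightarrow> nat \<Rightarrow> nat \<Rightarrow> (nat \<Rightarrow> nat) \<Rightarrow> nat" where
  "RR N N' m f = card {i\<in>{N..<N'}. f i = jstar N' m f}"

lemma jstar_prop:
  assumes "0 < m"
  shows "jstar N m f < m \<and> load N f (jstar N m f) = max_load N m f"
proof -
  have "max_load N m f \<in> load N f ` {..<m}"
    unfolding max_load_load using assms by (intro Max_in) auto
  then obtain j where "j < m" "load N f j = max_load N m f" by auto
  then show ?thesis unfolding jstar_def
    using LeastI[of "\<lambda>j. j < m \<and> load N f j = max_load N m f" j] by simp
qed

lemma load_le_max: "j < m \<Longrightarrow> load N f j \<le> max_load N m f"
  unfolding max_load_load by (intro Max_ge) auto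

lemma load_split:
  assumes "N \<le> N'"
  shows "load N' f j = load N f j + card {i\<in>{N..<N'}. f i = j}"
proof -
  define A where "A = {i\<in>{..<N}. f i = j}"
  define B where "B = {i\<in>{N..<N'}. f i = j}"
  have e: "{i\<in>{..<N'}. f i = j} = A \<union> B"
    using assms unfolding A_def B_def by auto
  have fA: "finite A" unfolding A_def by simp
  have fB: "finite B" unfolding B_def by simp
  have d: "A \<inter> B = {}" unfolding A_def B_def by auto
  have "card (A \<union> B) = card A + card B" using card_Un_disjoint[OF fA fB d] .
  then show ?thesis unfolding load_def e by (simp only: A_def B_def)
qed

lemma ml_mono:
  assumes "N \<le> N'" "0 < m"
  shows "max_load N m f \<le> max_load N' m f"
proof -
  have "max_load N m f \<in> load N f ` {..<m}"
    unfolding max_load_load using assms by (intro Max_in) auto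
  then obtain j where j: "j < m" "load N f j = max_load N m f" by auto
  have "load N f j \<le> load N' f j" using load_split[OF assms(1)] by simp
  also have "\<dots> \<le> max_load N' m f" using load_le_max j by blast
  finally show ?thesis using j by simp
qed

lemma ml_RR:
  assumes "N \<le> N'" "0 < m"
  shows "max_load N' m f \<le> max_load N m f + RR N N' m f"
proof -
  have "max_load N' m f = load N' f (jstar N' m f)" using jstar_prop[OF assms(2)] by simp
  also have "\<dots> = load N f (jstar N' m f) + RR N N' m f"
    unfolding RR_def by (rule load_split[OF assms(1)])
  also have "load N f (jstar N' m f) \<le> max_load N m f"
    using load_le_max jstar_prop[OF assms(2)] by blast
  finally show ?thesis by simp
qed

lemma card_as_sum: "real (card {i\<in>A. P i}) = (\<Sum>i\<in>A. if P i then 1 else 0)" if "finite A"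
  using that by (simp add: sum.If_cases) (simp add: Int_def)

definition sw :: "nat \<Rightarrow> nat \<Rightarrow> nat" where
  "sw i k = (if k = i then 0 else if k = 0 then i else k)"

lemma sw_sw [simp]: "sw i (sw i k) = k" unfolding sw_def by auto

lemma load_sw:
  assumes "i < N"
  shows "load N (f \<circ> sw i) j = load N f j"
proof -
  have "{k\<in>{..<N}. (f \<circ> sw i) k = j} = sw i ` {k\<in>{..<N}. f k = j}"
  proof (intro set_eqI iffI)
    fix x assume "x \<in> {k\<in>{..<N}. (f \<circ> sw i) k = j}"
    then show "x \<in> sw i ` {k\<in>{..<N}. f k = j}"
      using assms by (intro image_eqI[of _ _ "sw i x"]) (auto simp: sw_def)
  next
    fix x assume "x \<in> sw i ` {k\<in>{..<N}. f k = j}"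
    then show "x \<in> {k\<in>{..<N}. (f \<circ> sw i) k = j}"
      using assms by (auto simp: sw_def)
  qed
  moreover have "inj (sw i)" by (metis injI sw_sw)
  ultimately show ?thesis unfolding load_def by (simp add: card_image inj_on_subset)
qed

lemma ml_sw: "i < N \<Longrightarrow> max_load N m (f \<circ> sw i) = max_load N m f"
  unfolding max_load_load by (simp add: load_sw)

lemma jstar_sw: "i < N \<Longrightarrow> jstar N m (f \<circ> sw i) = jstar N m f"
  unfolding jstar_def by (simp add: load_sw ml_sw)


abbreviation SS :: "nat \<Rightarrow> nat \<Rightarrow> (nat \<Rightarrow> nat) set" where
  "SS N m \<equiv> PiE_dflt {..<N} 0 (\<lambda>_. {..<m})"

lemma finite_SS: "finite (SS N m)"
  by (intro finite_PiE_dflt) auto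

lemma sw_less: "i < N \<Longrightarrow> x < N \<Longrightarrow> sw i x < N"
  unfolding sw_def by auto

lemma sw_out: "i < N \<Longrightarrow> \<not> x < N \<Longrightarrow> sw i x = x"
  unfolding sw_def by auto

lemma bij_sw: 
  assumes "i < N"
  shows "bij_betw (\<lambda>f. f \<circ> sw i) (SS N m) (SS N m)"
proof (rule bij_betw_byWitness[where f' = "\<lambda>f. f \<circ> sw i"])
  show "\<forall>a\<in>SS N m. a \<circ> sw i \<circ> sw i = a" by (auto simp: fun_eq_iff)
  then show "\<forall>a\<in>SS N m. a \<circ> sw i \<circ> sw i = a" .
  show "(\<lambda>f. f \<circ> sw i) ` SS N m \<subseteq> SS N m"
  proof
    fix g assume "g \<in> (\<lambda>f. f \<circ> sw i) ` SS N m"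
    then obtain f where f: "f \<in> SS N m" and g: "g = f \<circ> sw i" by blast
    have "g x \<in> {..<m}" if "x \<in> {..<N}" for x
      using f sw_less[OF assms, of x] that unfolding g PiE_dflt_def by auto
    moreover have "g x = 0" if "x \<notin> {..<N}" for x
      using f sw_out[OF assms, of x] that unfolding g PiE_dflt_def by auto
    ultimately show "g \<in> SS N m" unfolding PiE_dflt_def by blast
  qed
  then show "(\<lambda>f. f \<circ> sw i) ` SS N m \<subseteq> SS N m" .
qed

lemma sym_sum:
  fixes w :: "nat \<Rightarrow> real"
  assumes "i < N"
  shows "(\<Sum>f\<in>SS N m. (if f i = jstar N m f then 1 else 0) * w (max_load N m f))
       = (\<Sum>f\<in>SS N m. (if f 0 = jstar N m f then 1 else 0) * w (max_load N m f))"
proof -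
  have "(\<Sum>f\<in>SS N m. (if (f \<circ> sw i) 0 = jstar N m (f \<circ> sw i) then 1 else 0) * w (max_load N m (f \<circ> sw i)))
       = (\<Sum>f\<in>SS N m. (if f 0 = jstar N m f then 1 else 0) * w (max_load N m f))"
    by (rule sum.reindex_bij_betw[OF bij_sw[OF assms]])
  moreover have "sw i 0 = i" unfolding sw_def by auto
  ultimately show ?thesis using assms by (simp add: jstar_sw ml_sw)
qed

lemma key_identity:
  fixes w :: "nat \<Rightarrow> real"
  assumes "N \<le> N'" "0 < m"
  shows "(\<Sum>f\<in>SS N' m. real (RR N N' m f) * w (max_load N' m f)) * real N'
       = real (N' - N) * (\<Sum>f\<in>SS N' m. real (max_load N' m f) * w (max_load N' m f))"
proof -
  define T where "T = (\<Sum>f\<in>SS N' m. (if f 0 = jstar N' m f then 1 else 0) * w (max_load N' m f))"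
  have R: "real (RR N N' m f) = (\<Sum>i\<in>{N..<N'}. if f i = jstar N' m f then 1 else 0)" for f
    unfolding RR_def by (rule card_as_sum) simp
  have M: "real (max_load N' m f) = (\<Sum>i\<in>{..<N'}. if f i = jstar N' m f then 1 else 0)" for f
  proof -
    have "max_load N' m f = load N' f (jstar N' m f)" using jstar_prop[OF assms(2)] by simp
    then show ?thesis unfolding load_def using card_as_sum[of "{..<N'}"] by simp
  qed
  have "(\<Sum>f\<in>SS N' m. real (RR N N' m f) * w (max_load N' m f))
      = (\<Sum>f\<in>SS N' m. \<Sum>i\<in>{N..<N'}. (if f i = jstar N' m f then 1 else 0) * w (max_load N' m f))"
    unfolding R by (simp add: sum_distrib_right)
  also have "\<dots> = (\<Sum>i\<in>{N..<N'}. \<Sum>f\<in>SS N' m. (if f i = jstar N' m f then 1 else 0) * w (max_load N' m f))"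
    by (rule sum.swap)
  also have "\<dots> = (\<Sum>i\<in>{N..<N'}. T)"
    unfolding T_def by (intro sum.cong refl sym_sum) auto
  finally have 1: "(\<Sum>f\<in>SS N' m. real (RR N N' m f) * w (max_load N' m f)) = real (N' - N) * T"
    by simp
  have "(\<Sum>f\<in>SS N' m. real (max_load N' m f) * w (max_load N' m f))
      = (\<Sum>f\<in>SS N' m. \<Sum>i\<in>{..<N'}. (if f i = jstar N' m f then 1 else 0) * w (max_load N' m f))"
    unfolding M by (simp add: sum_distrib_right)
  also have "\<dots> = (\<Sum>i\<in>{..<N'}. \<Sum>f\<in>SS N' m. (if f i = jstar N' m f then 1 else 0) * w (max_load N' m f))"
    by (rule sum.swap)
  also have "\<dots> = (\<Sum>i\<in>{..<N'}. T)"
    unfolding T_def by (intro sum.cong refl sym_sum) auto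
  finally have 2: "(\<Sum>f\<in>SS N' m. real (max_load N' m f) * w (max_load N' m f)) = real N' * T"
    by simp
  show ?thesis unfolding 1 2 by simp
qed


lemma balls_eq: "0 < m \<Longrightarrow> balls_pmf N m = pmf_of_set (SS N m)"
  unfolding balls_pmf_def by (rule Pi_pmf_of_set) auto

lemma SS_ne: "0 < m \<Longrightarrow> SS N m \<noteq> {}"
  by (simp add: lessThan_empty_iff)

lemma probP:
  assumes "0 < m"
  shows "measure_pmf.prob (map_pmf g (balls_pmf N m)) X
       = real (card {f\<in>SS N m. g f \<in> X}) / real (card (SS N m))"
proof -
  have "SS N m \<inter> g -` X = {f\<in>SS N m. g f \<in> X}" by auto
  then show ?thesis
    unfolding measure_map_pmf balls_eq[OF assms]
    by (simp add: measure_pmf_of_set[OF SS_ne[OF assms] finite_SS])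
qed

lemma expect_eq:
  assumes "0 < m"
  shows "measure_pmf.expectation (maxload_pmf N m) real
       = (\<Sum>f\<in>SS N m. real (max_load N m f)) / real (card (SS N m))"
  unfolding maxload_pmf_def balls_eq[OF assms] integral_map_pmf
  by (rule integral_pmf_of_set[OF SS_ne[OF assms] finite_SS])

lemma card_le_sum:
  fixes F :: "'a \<Rightarrow> real"
  assumes "finite S" "A \<subseteq> S" "\<And>f. f \<in> S \<Longrightarrow> 0 \<le> F f" "\<And>f. f \<in> A \<Longrightarrow> c \<le> F f"
  shows "real (card A) * c \<le> (\<Sum>f\<in>S. F f)"
proof -
  have "real (card A) * c = (\<Sum>f\<in>A. c)" by simp
  also have "\<dots> \<le> (\<Sum>f\<in>A. F f)" using assms(4) by (rule sum_mono)
  also have "\<dots> \<le> (\<Sum>f\<in>S. F f)" using assms by (intro sum_mono2) auto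
  finally show ?thesis .
qed

lemma ml_pos:
  assumes "0 < m" "0 < N" "f \<in> SS N m"
  shows "1 \<le> max_load N m f"
proof -
  have "f 0 < m" using assms unfolding PiE_dflt_def by auto
  have "0 \<in> {i\<in>{..<N}. f i = f 0}" using assms by auto
  then have "0 < card {i\<in>{..<N}. f i = f 0}"
    by (intro card_gt_0_iff[THEN iffD2] conjI) auto
  then have "1 \<le> load N f (f 0)" unfolding load_def by simp
  also have "\<dots> \<le> max_load N m f" using load_le_max \<open>f 0 < m\<close> by blast
  finally show ?thesis .
qed


lemma bounds:
  fixes \<delta> :: real
  assumes NN: "N \<le> N'" and N0: "0 < N" and m0: "0 < m" and d0: "0 < \<delta>"
  shows "1 - real (N' - N) / (real N' * \<delta>) \<le> measure_pmf.prob
           (map_pmf (\<lambda>f. (max_load N' m f, max_load N m f)) (balls_pmf N' m))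
           {(a, b). real a - \<delta> * measure_pmf.expectation (maxload_pmf N' m) real \<le> real b}"
    and "1 - measure_pmf.prob (map_pmf (\<lambda>f. (max_load N' m f, max_load N m f)) (balls_pmf N' m))
               {(a, b). real a > 1 / \<delta>}
           - real (N' - N) / (real N' * \<delta>) \<le> measure_pmf.prob
           (map_pmf (\<lambda>f. (max_load N' m f, max_load N m f)) (balls_pmf N' m)) {(a, b). a = b}"
proof -
  define S where "S = SS N' m"
  define D where "D = real (card S)"
  define g where "g = (\<lambda>f. (max_load N' m f, max_load N m f))"
  define E where "E = measure_pmf.expectation (maxload_pmf N' m) real"
  define \<Sigma> where "\<Sigma> = (\<Sum>f\<in>S. real (max_load N' m f))"
  have N'0: "0 < N'" using NN N0 by simp
  have fS: "finite S" unfolding S_def by (rule finite_SS)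
  have D0: "0 < D" unfolding D_def S_def using SS_ne[OF m0] finite_SS
    by (simp add: card_gt_0_iff)
  have ED: "E = \<Sigma> / D" unfolding E_def \<Sigma>_def D_def S_def by (rule expect_eq[OF m0])
  have "real (card S) * 1 \<le> \<Sigma>" unfolding \<Sigma>_def
    by (rule card_le_sum[OF fS]) (use ml_pos[OF m0 N'0] in \<open>auto simp: S_def\<close>)
  then have SD: "D \<le> \<Sigma>" unfolding D_def by simp
  have E0: "0 < E" unfolding ED using D0 SD by simp
  have prob: "measure_pmf.prob (map_pmf g (balls_pmf N' m)) X = real (card {f\<in>S. g f \<in> X}) / D" for X
    unfolding S_def D_def by (rule probP[OF m0])
  have compl: "real (card {f\<in>S. g f \<in> X}) = D - real (card {f\<in>S. g f \<notin> X})" for X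
  proof -
    have "{f\<in>S. g f \<in> X} = S - {f\<in>S. g f \<notin> X}" by auto
    moreover have "card (S - {f\<in>S. g f \<notin> X}) = card S - card {f\<in>S. g f \<notin> X}"
      by (rule card_Diff_subset) (use fS in auto)
    moreover have "card {f\<in>S. g f \<notin> X} \<le> card S" by (rule card_mono[OF fS]) auto
    ultimately show ?thesis unfolding D_def by simp
  qed
  have RR_ge: "real (max_load N' m f) - real (max_load N m f) \<le> real (RR N N' m f)" for f
    using ml_RR[OF NN m0, of f] by linarith
  have ml_le: "max_load N m f \<le> max_load N' m f" for f by (rule ml_mono[OF NN m0])
  have Kpos: "0 \<le> real (N' - N)" by simp
  define X1 where "X1 = {(a, b). real a - \<delta> * E \<le> real b}"
  define A where "A = {f\<in>S. g f \<notin> X1}"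
  have "real (card A) * (\<delta> * E) \<le> (\<Sum>f\<in>S. real (RR N N' m f) * 1)"
  proof (rule card_le_sum[OF fS])
    show "A \<subseteq> S" unfolding A_def by auto
    fix f assume "f \<in> A"
    then have "real (max_load N' m f) - \<delta> * E > real (max_load N m f)"
      unfolding A_def X1_def g_def by auto
    then show "\<delta> * E \<le> real (RR N N' m f) * 1" using RR_ge[of f] by simp
  qed simp
  also have "\<dots> = real (N' - N) * (\<Sum>f\<in>S. real (max_load N' m f) * 1) / real N'"
    using key_identity[OF NN m0, of "\<lambda>_. 1"] N'0 unfolding S_def
    by (simp add: field_simps)
  also have "\<dots> = real (N' - N) * (E * D) / real N'"
    unfolding ED \<Sigma>_def using D0 by simp
  finally have A1: "real (card A) * (\<delta> * E) \<le> real (N' - N) * (E * D) / real N'" .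
  have "real (card A) / D \<le> real (N' - N) / (real N' * \<delta>)"
  proof -
    have "real (card A) * \<delta> * E \<le> (real (N' - N) * D / real N') * E"
      using A1 by (simp add: algebra_simps)
    then have "real (card A) * \<delta> \<le> real (N' - N) * D / real N'"
      using E0 by (simp only: mult_le_cancel_right_pos)
    then show ?thesis using D0 d0 N'0 by (simp add: field_simps)
  qed
  moreover have "measure_pmf.prob (map_pmf g (balls_pmf N' m)) X1 = 1 - real (card A) / D"
    using prob[of X1] compl[of X1] D0 unfolding A_def by (simp add: field_simps)
  ultimately show "1 - real (N' - N) / (real N' * \<delta>) \<le> measure_pmf.prob
           (map_pmf (\<lambda>f. (max_load N' m f, max_load N m f)) (balls_pmf N' m))
           {(a, b). real a - \<delta> * measure_pmf.expectation (maxload_pmf N' m) real \<le> real b}"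
    unfolding g_def[symmetric] E_def[symmetric] X1_def[symmetric] by linarith
  define X2 where "X2 = {(a, b). (a::nat) = b}"
  define X3 where "X3 = {(a, b::nat). real (a::nat) > 1 / \<delta>}"
  define B where "B = {f\<in>S. g f \<notin> X2}"
  define B1 where "B1 = {f\<in>S. g f \<in> X3}"
  define B2 where "B2 = {f\<in>S. g f \<notin> X3 \<and> g f \<notin> X2}"
  define w where "w = (\<lambda>x::nat. if real x > 1 / \<delta> then 0 else (1::real))"
  have "B \<subseteq> B1 \<union> B2" unfolding B_def B1_def B2_def by auto
  then have "card B \<le> card (B1 \<union> B2)" by (intro card_mono) (use fS in \<open>auto simp: B1_def B2_def\<close>)
  also have "\<dots> \<le> card B1 + card B2" by (rule card_Un_le)
  finally have cB: "real (card B) \<le> real (card B1) + real (card B2)" by linarith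
  have "real (card B2) * 1 \<le> (\<Sum>f\<in>S. real (RR N N' m f) * w (max_load N' m f))"
  proof (rule card_le_sum[OF fS])
    show "B2 \<subseteq> S" unfolding B2_def by auto
    show "0 \<le> real (RR N N' m f) * w (max_load N' m f)" for f unfolding w_def by simp
    fix f assume "f \<in> B2"
    then have "\<not> real (max_load N' m f) > 1 / \<delta>" "max_load N' m f \<noteq> max_load N m f"
      unfolding B2_def X2_def X3_def g_def by auto
    then show "1 \<le> real (RR N N' m f) * w (max_load N' m f)"
      using ml_RR[OF NN m0, of f] ml_le[of f] unfolding w_def by simp
  qed
  also have "\<dots> = real (N' - N) * (\<Sum>f\<in>S. real (max_load N' m f) * w (max_load N' m f)) / real N'"
    using key_identity[OF NN m0, of w] N'0 unfolding S_def
    by (simp add: field_simps)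
  also have "\<dots> \<le> real (N' - N) * (\<Sum>f\<in>S. 1 / \<delta>) / real N'"
  proof -
    have "(\<Sum>f\<in>S. real (max_load N' m f) * w (max_load N' m f)) \<le> (\<Sum>f\<in>S. 1 / \<delta>)"
      by (rule sum_mono) (use d0 in \<open>auto simp: w_def\<close>)
    then show ?thesis using N'0 by (intro divide_right_mono mult_left_mono) auto
  qed
  also have "\<dots> = real (N' - N) * D / (real N' * \<delta>)" unfolding D_def by simp
  finally have "real (card B2) / D \<le> real (N' - N) / (real N' * \<delta>)"
    using D0 by (simp add: field_simps)
  moreover have "measure_pmf.prob (map_pmf g (balls_pmf N' m)) X2 = 1 - real (card B) / D"
    using prob[of X2] compl[of X2] D0 unfolding B_def by (simp add: field_simps)
  moreover have "measure_pmf.prob (map_pmf g (balls_pmf N' m)) X3 = real (card B1) / D"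
    using prob[of X3] unfolding B1_def by simp
  moreover have "real (card B) / D \<le> real (card B1) / D + real (card B2) / D"
    using cB D0 by (simp add: field_simps)
  ultimately show "1 - measure_pmf.prob (map_pmf (\<lambda>f. (max_load N' m f, max_load N m f)) (balls_pmf N' m))
               {(a, b). real a > 1 / \<delta>}
           - real (N' - N) / (real N' * \<delta>) \<le> measure_pmf.prob
           (map_pmf (\<lambda>f. (max_load N' m f, max_load N m f)) (balls_pmf N' m)) {(a, b). a = b}"
    unfolding g_def[symmetric] X2_def[symmetric] X3_def[symmetric] by linarith
qed



lemma snd_marg:
  assumes "N \<le> N'"
  shows "map_pmf (max_load N m) (balls_pmf N' m) = maxload_pmf N m"
proof -
  have "balls_pmf N m = map_pmf (\<lambda>f x. if x \<in> {..<N} then f x else 0) (balls_pmf N' m)"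
    unfolding balls_pmf_def using assms by (intro Pi_pmf_subset) auto
  moreover have "max_load N m (\<lambda>x. if x \<in> {..<N} then f x else 0) = max_load N m f" for f
  proof -
    have "{i\<in>{..<N}. (if i \<in> {..<N} then f i else 0) = j} = {i\<in>{..<N}. f i = j}" for j by auto
    then show ?thesis unfolding max_load_def by simp
  qed
  ultimately show ?thesis unfolding maxload_pmf_def by (simp add: map_pmf_comp)
qed

theorem mainTheorem18:
  fixes N m :: "nat \<Rightarrow> nat" and \<delta> \<epsilon> :: "nat \<Rightarrow> real"
  assumes "\<forall>n. N n > 0" and "\<forall>n. m n > 0"
    and "filterlim N at_top sequentially" and "filterlim m at_top sequentially"
    and "\<forall>n. \<delta> n > 0" and "\<forall>n. \<epsilon> n > 0"
    and "\<delta> \<longlonglongrightarrow> 0" and "\<epsilon> \<longlonglongrightarrow> 0"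
    and "\<epsilon> \<in> o(\<delta>)"
  shows "\<exists>p :: nat \<Rightarrow> (nat \<times> nat) pmf.
    (\<forall>n. map_pmf fst (p n) = maxload_pmf (nat \<lfloor>real (N n) * (1 + \<epsilon> n)\<rfloor>) (m n)
        \<and> map_pmf snd (p n) = maxload_pmf (N n) (m n)
        \<and> (\<forall>(a, b) \<in> set_pmf (p n). b \<le> a))
    \<and> ((\<lambda>n. measure_pmf.prob (p n)
          {(a, b). real a - \<delta> n * measure_pmf.expectation
              (maxload_pmf (nat \<lfloor>real (N n) * (1 + \<epsilon> n)\<rfloor>) (m n)) real \<le> real b})
        \<longlonglongrightarrow> 1)
    \<and> (((\<lambda>n. measure_pmf.prob (p n) {(a, b). real a > 1 / \<delta> n}) \<longlonglongrightarrow> 0)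
        \<longrightarrow> ((\<lambda>n. measure_pmf.prob (p n) {(a, b). a = b}) \<longlonglongrightarrow> 1))"
proof -
  define N' where "N' = (\<lambda>n. nat \<lfloor>real (N n) * (1 + \<epsilon> n)\<rfloor>)"
  define p where "p = (\<lambda>n. map_pmf (\<lambda>f. (max_load (N' n) (m n) f, max_load (N n) (m n) f))
                                    (balls_pmf (N' n) (m n)))"
  have NN: "N n \<le> N' n" for n
  proof -
    have "0 \<le> real (N n) * \<epsilon> n" using assms(6)[rule_format, of n] by simp
    then have "real (N n) \<le> real (N n) * (1 + \<epsilon> n)" by (simp add: algebra_simps)
    then have "int (N n) \<le> \<lfloor>real (N n) * (1 + \<epsilon> n)\<rfloor>" by (simp add: le_floor_iff)
    then show ?thesis unfolding N'_def by linarith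
  qed
  have Kb: "real (N' n - N n) / (real (N' n) * \<delta> n) \<le> \<epsilon> n / \<delta> n" for n
  proof -
    have e0: "0 < \<epsilon> n" and d0: "0 < \<delta> n" and N0: "0 < N n" using assms by auto
    have "real (N' n) \<le> real (N n) * (1 + \<epsilon> n)"
      unfolding N'_def using e0 by (simp add: of_nat_nat)
    then have "real (N' n - N n) \<le> real (N n) * \<epsilon> n" using NN[of n] by (simp add: of_nat_diff algebra_simps)
    also have "\<dots> \<le> real (N' n) * \<epsilon> n" using NN[of n] e0 by (intro mult_right_mono) auto
    finally have "real (N' n - N n) \<le> real (N' n) * \<epsilon> n" .
    moreover have "0 < real (N' n)" using NN[of n] N0 by simp
    ultimately show ?thesis using d0 by (simp add: field_simps)
  qed
  have ed: "(\<lambda>n. \<epsilon> n / \<delta> n) \<longlonglongrightarrow> 0" using smalloD_tendsto[OF assms(9)] by simp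
  have P1: "\<forall>n. map_pmf fst (p n) = maxload_pmf (nat \<lfloor>real (N n) * (1 + \<epsilon> n)\<rfloor>) (m n)
        \<and> map_pmf snd (p n) = maxload_pmf (N n) (m n)
        \<and> (\<forall>(a, b) \<in> set_pmf (p n). b \<le> a)"
  proof
    fix n
    show "map_pmf fst (p n) = maxload_pmf (nat \<lfloor>real (N n) * (1 + \<epsilon> n)\<rfloor>) (m n)
        \<and> map_pmf snd (p n) = maxload_pmf (N n) (m n)
        \<and> (\<forall>(a, b) \<in> set_pmf (p n). b \<le> a)"
      unfolding p_def using snd_marg[OF NN[of n]] ml_mono[OF NN[of n]] assms(2)
      by (auto simp: map_pmf_comp maxload_pmf_def N'_def)
  qed
  have lb1: "1 - \<epsilon> n / \<delta> n \<le> measure_pmf.prob (p n)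
          {(a, b). real a - \<delta> n * measure_pmf.expectation
              (maxload_pmf (nat \<lfloor>real (N n) * (1 + \<epsilon> n)\<rfloor>) (m n)) real \<le> real b}" for n
  proof -
    have "1 - \<epsilon> n / \<delta> n \<le> 1 - real (N' n - N n) / (real (N' n) * \<delta> n)" using Kb[of n] by simp
    also have "\<dots> \<le> measure_pmf.prob (p n)
          {(a, b). real a - \<delta> n * measure_pmf.expectation (maxload_pmf (N' n) (m n)) real \<le> real b}"
      unfolding p_def by (rule bounds(1)[OF NN[of n]]) (use assms(1,2,5) in auto)
    finally show ?thesis unfolding N'_def .
  qed
  have P2: "(\<lambda>n. measure_pmf.prob (p n)
          {(a, b). real a - \<delta> n * measure_pmf.expectation
              (maxload_pmf (nat \<lfloor>real (N n) * (1 + \<epsilon> n)\<rfloor>) (m n)) real \<le> real b})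
        \<longlonglongrightarrow> 1"
  proof -
    have l: "(\<lambda>n. 1 - \<epsilon> n / \<delta> n) \<longlonglongrightarrow> 1" using tendsto_diff[OF tendsto_const ed] by simp
    show ?thesis
      by (rule tendsto_sandwich[where f="\<lambda>n. 1 - \<epsilon> n / \<delta> n" and h="\<lambda>_. 1"])
        (auto intro!: always_eventually lb1 l simp: measure_pmf.prob_le_1)
  qed
  have P3: "((\<lambda>n. measure_pmf.prob (p n) {(a, b). real a > 1 / \<delta> n}) \<longlonglongrightarrow> 0)
        \<longrightarrow> ((\<lambda>n. measure_pmf.prob (p n) {(a, b). a = b}) \<longlonglongrightarrow> 1)"
  proof
    assume q: "(\<lambda>n. measure_pmf.prob (p n) {(a, b). real a > 1 / \<delta> n}) \<longlonglongrightarrow> 0"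
    have lb2: "1 - measure_pmf.prob (p n) {(a, b). real a > 1 / \<delta> n} - \<epsilon> n / \<delta> n
               \<le> measure_pmf.prob (p n) {(a, b). a = b}" for n
    proof -
      have "1 - measure_pmf.prob (p n) {(a, b). real a > 1 / \<delta> n} - real (N' n - N n) / (real (N' n) * \<delta> n)
               \<le> measure_pmf.prob (p n) {(a, b). a = b}"
        unfolding p_def by (rule bounds(2)[OF NN[of n]]) (use assms(1,2,5) in auto)
      then show ?thesis using Kb[of n] by linarith
    qed
    show "(\<lambda>n. measure_pmf.prob (p n) {(a, b). a = b}) \<longlonglongrightarrow> 1"
    proof -
      have l: "(\<lambda>n. 1 - measure_pmf.prob (p n) {(a, b). real a > 1 / \<delta> n} - \<epsilon> n / \<delta> n) \<longlonglongrightarrow> 1"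
        using tendsto_diff[OF tendsto_diff[OF tendsto_const q] ed] by simp
      show ?thesis
        by (rule tendsto_sandwich[where f="\<lambda>n. 1 - measure_pmf.prob (p n) {(a, b). real a > 1 / \<delta> n} - \<epsilon> n / \<delta> n" and h="\<lambda>_. 1"])
          (auto intro!: always_eventually lb2 l simp: measure_pmf.prob_le_1)
    qed
  qed
  show ?thesis using P1 P2 P3 by blast
qed

end
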